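(* Let $a^*_{\mathsf A},a^*_{\mathsf B}\ge1$ and $l^*_{\mathsf A},l^*_{\mathsf B}\in[0,1)$. On each mode $X\in\{\mathsf A,\mathsf B\}$ of a two-mode system apply the amplification channel with parameter $a^*_X$ followed by the loss channel with parameter $l^*_X$. The resulting product channel maps every two-mode Gaussian state to a separable state (i.e. annihilates entanglement of all two-mode Gaussian states) if and only if $$\frac1{a^*_{\mathsf A}}+\frac1{a^*_{\mathsf B}}\le1.$$
   Context: Covariance-matrix convention: vacuum has covariance matrix $\mathbb 1/2$. Loss with parameter $l\in[0,1]$: $V\mapsto(1-l)V+l\,\mathbb 1/2$. Amplification with parameter $a\ge1$: $V\mapsto aV+(a-1)\mathbb 1/2$. Separable means separable across the $\mathsf A$–$\mathsf B$ partition. *)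

theory Defs
  imports Complex_Main
begin

text \<open>Covariance matrices of n-mode systems are represented as functions
  nat => nat => real, only entries with indices < 2n being relevant.
  Quadrature ordering (x_1,p_1,x_2,p_2,...). Vacuum has covariance 1/2.\<close>

definition symp_form :: "nat \<Rightarrow> nat \<Rightarrow> nat \<Rightarrow> real" where
  "symp_form n i j =
     (if i < 2*n \<and> j < 2*n \<and> even i \<and> j = i + 1 then 1
      else if i < 2*n \<and> j < 2*n \<and> odd i \<and> i = j + 1 then -1 else 0)"

definition is_cm :: "nat \<Rightarrow> (nat \<Rightarrow> nat \<Rightarrow> real) \<Rightarrow> bool" where
  "is_cm n V \<longleftrightarrow>
     (\<forall>i<2*n. \<forall>j<2*n. V i j = V j i) \<and>
     (\<forall>z :: nat \<Rightarrow> complex.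
        let q = (\<Sum>i<2*n. \<Sum>j<2*n. cnj (z i) *
                   (complex_of_real (V i j) + \<i> * complex_of_real (symp_form n i j) / 2) * z j)
        in Im q = 0 \<and> 0 \<le> Re q)"

definition mat_le :: "nat \<Rightarrow> (nat \<Rightarrow> nat \<Rightarrow> real) \<Rightarrow> (nat \<Rightarrow> nat \<Rightarrow> real) \<Rightarrow> bool" where
  "mat_le n W V \<longleftrightarrow>
     (\<forall>x :: nat \<Rightarrow> real. 0 \<le> (\<Sum>i<2*n. \<Sum>j<2*n. x i * (V i j - W i j) * x j))"

definition direct_sum_1_1 ::
  "(nat \<Rightarrow> nat \<Rightarrow> real) \<Rightarrow> (nat \<Rightarrow> nat \<Rightarrow> real) \<Rightarrow> nat \<Rightarrow> nat \<Rightarrow> real" where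
  "direct_sum_1_1 GA GB i j =
     (if i < 2 \<and> j < 2 then GA i j
      else if 2 \<le> i \<and> 2 \<le> j then GB (i - 2) (j - 2) else 0)"

text \<open>Separability of a two-mode Gaussian state with covariance matrix V across
  the A|B split (Werner--Wolf criterion): V >= gamma_A (+) gamma_B for some
  valid single-mode covariance matrices gamma_A, gamma_B.\<close>
definition gauss_separable_2 :: "(nat \<Rightarrow> nat \<Rightarrow> real) \<Rightarrow> bool" where
  "gauss_separable_2 V \<longleftrightarrow>
     (\<exists>GA GB. is_cm 1 GA \<and> is_cm 1 GB \<and> mat_le 2 (direct_sum_1_1 GA GB) V)"

definition local_channel_2 ::
  "real \<Rightarrow> real \<Rightarrow> real \<Rightarrow> real \<Rightarrow> (nat \<Rightarrow> nat \<Rightarrow> real) \<Rightarrow> nat \<Rightarrow> nat \<Rightarrow> real" where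
  "local_channel_2 xA yA xB yB V i j =
     (let xf = (\<lambda>k. if k < 2 then xA else xB);
          yf = (\<lambda>k. if k < 2 then yA else yB)
      in xf i * V i j * xf j + (if i = j then yf i else 0))"

text \<open>Amplification a: V -> a V + (a-1) 1/2 ; loss l: V -> (1-l) V + l 1/2.\<close>
definition amp_2 :: "real \<Rightarrow> real \<Rightarrow> (nat \<Rightarrow> nat \<Rightarrow> real) \<Rightarrow> nat \<Rightarrow> nat \<Rightarrow> real" where
  "amp_2 aA aB = local_channel_2 (sqrt aA) ((aA - 1) / 2) (sqrt aB) ((aB - 1) / 2)"

definition loss_2 :: "real \<Rightarrow> real \<Rightarrow> (nat \<Rightarrow> nat \<Rightarrow> real) \<Rightarrow> nat \<Rightarrow> nat \<Rightarrow> real" where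
  "loss_2 lA lB = local_channel_2 (sqrt (1 - lA)) (lA / 2) (sqrt (1 - lB)) (lB / 2)"

end

theory Submission
  imports Defs
begin

lemma four_set: "{..<4::nat} = {0,1,2,3}" by auto
lemma two_set: "{..<2::nat} = {0,1}" by auto

definition qv4 :: "(nat \<Rightarrow> nat \<Rightarrow> real) \<Rightarrow> real \<Rightarrow> real \<Rightarrow> real \<Rightarrow> real \<Rightarrow> real" where
  "qv4 V x0 x1 x2 x3 = V 0 0*x0^2 + V 1 1*x1^2 + V 2 2 * x2^2 + V 3 3*x3^2 + 2*V 0 1*x0*x1
     + 2*V 0 2*x0*x2 + 2*V 0 3*x0*x3 + 2*V 1 2*x1*x2 + 2*V 1 3*x1*x3 + 2*V 2 3*x2*x3"

definition qv2 :: "(nat \<Rightarrow> nat \<Rightarrow> real) \<Rightarrow> real \<Rightarrow> real \<Rightarrow> real" where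
  "qv2 G u0 u1 = G 0 0*u0^2 + 2*G 0 1*u0*u1 + G 1 1*u1^2"

definition sym4 :: "(nat \<Rightarrow> nat \<Rightarrow> real) \<Rightarrow> bool" where
  "sym4 V \<longleftrightarrow> V 1 0 = V 0 1 \<and> V 2 0 = V 0 2 \<and> V 3 0 = V 0 3 \<and> V 2 1 = V 1 2 \<and> V 3 1 = V 1 3 \<and> V 3 2 = V 2 3"

lemma sym4_iff: "sym4 V \<longleftrightarrow> (\<forall>i<2*2. \<forall>j<2*2. V i j = V j i)"
proof
  assume "sym4 V"
  then show "\<forall>i<2*2. \<forall>j<2*2. V i j = V j i"
    unfolding sym4_def by (auto simp: less_Suc_eq numeral_eq_Suc)
next
  assume "\<forall>i<2*2. \<forall>j<2*2. V i j = V j i"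
  then show "sym4 V" unfolding sym4_def by auto
qed

lemma sym2_iff: "(G 1 0 = G 0 1) \<longleftrightarrow> (\<forall>i<2*(1::nat). \<forall>j<2*(1::nat). G i j = G j i)"
  by (auto simp: less_Suc_eq numeral_eq_Suc)

lemma cm2_iff: "is_cm 2 V \<longleftrightarrow> sym4 V \<and>
   (\<forall>x0 x1 x2 x3 y0 y1 y2 y3. x0*y1 - x1*y0 + x2*y3 - x3*y2 \<le> qv4 V x0 x1 x2 x3 + qv4 V y0 y1 y2 y3)"
proof
  assume a: "is_cm 2 V"
  then have s: "sym4 V" unfolding is_cm_def sym4_iff by blast
  show "sym4 V \<and> (\<forall>x0 x1 x2 x3 y0 y1 y2 y3. x0*y1 - x1*y0 + x2*y3 - x3*y2 \<le> qv4 V x0 x1 x2 x3 + qv4 V y0 y1 y2 y3)"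
  proof (intro conjI allI s)
    fix x0 x1 x2 x3 y0 y1 y2 y3 :: real
    define z where "z = (\<lambda>i::nat. if i = 0 then Complex x0 y0 else if i = 1 then Complex x1 y1
        else if i = 2 then Complex x2 y2 else Complex x3 y3)"
    have "0 \<le> Re (\<Sum>i<2*2. \<Sum>j<2*2. cnj (z i) *
                   (complex_of_real (V i j) + \<i> * complex_of_real (symp_form 2 i j) / 2) * z j)"
      using a unfolding is_cm_def Let_def by blast
    then show "x0*y1 - x1*y0 + x2*y3 - x3*y2 \<le> qv4 V x0 x1 x2 x3 + qv4 V y0 y1 y2 y3"
      using s unfolding sym4_def qv4_def
      apply (simp add: z_def four_set symp_form_def power2_eq_square algebra_simps)
      apply (simp add: field_simps)
      done
  qed
next
  assume a: "sym4 V \<and> (\<forall>x0 x1 x2 x3 y0 y1 y2 y3. x0*y1 - x1*y0 + x2*y3 - x3*y2 \<le> qv4 V x0 x1 x2 x3 + qv4 V y0 y1 y2 y3)"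
  have s: "V 1 0 = V 0 1" "V 2 0 = V 0 2" "V 3 0 = V 0 3" "V 2 1 = V 1 2" "V 3 1 = V 1 3" "V 3 2 = V 2 3"
    using a unfolding sym4_def by auto
  show "is_cm 2 V"
    unfolding is_cm_def Let_def
  proof (intro conjI allI impI)
    show "V i j = V j i" if "i < 2*2" "j < 2*2" for i j using a sym4_iff that by blast
  next
    fix z :: "nat \<Rightarrow> complex"
    have h: "Re (z 0) * Im (z 1) - Re (z 1) * Im (z 0) + Re (z 2) * Im (z 3) - Re (z 3) * Im (z 2)
       \<le> qv4 V (Re (z 0)) (Re (z 1)) (Re (z 2)) (Re (z 3)) + qv4 V (Im (z 0)) (Im (z 1)) (Im (z 2)) (Im (z 3))"
      using a by blast
    show "Im (\<Sum>i<2*2. \<Sum>j<2*2. cnj (z i) *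
                   (complex_of_real (V i j) + \<i> * complex_of_real (symp_form 2 i j) / 2) * z j) = 0"
      using s by (simp add: four_set symp_form_def algebra_simps)
    show "0 \<le> Re (\<Sum>i<2*2. \<Sum>j<2*2. cnj (z i) *
                   (complex_of_real (V i j) + \<i> * complex_of_real (symp_form 2 i j) / 2) * z j)"
      using h s unfolding qv4_def
      apply (simp add: four_set symp_form_def power2_eq_square algebra_simps)
      apply (simp add: field_simps)
      done
  qed
qed

lemma cm1_iff: "is_cm 1 G \<longleftrightarrow> G 1 0 = G 0 1 \<and>
   (\<forall>u0 u1 v0 v1. u0*v1 - u1*v0 \<le> qv2 G u0 u1 + qv2 G v0 v1)"
proof
  assume a: "is_cm 1 G"
  then have s: "G 1 0 = G 0 1" unfolding is_cm_def sym2_iff by blast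
  show "G 1 0 = G 0 1 \<and> (\<forall>u0 u1 v0 v1. u0*v1 - u1*v0 \<le> qv2 G u0 u1 + qv2 G v0 v1)"
  proof (intro conjI allI s)
    fix u0 u1 v0 v1 :: real
    define z where "z = (\<lambda>i::nat. if i = 0 then Complex u0 v0 else Complex u1 v1)"
    have "0 \<le> Re (\<Sum>i<2*1. \<Sum>j<2*1. cnj (z i) *
                   (complex_of_real (G i j) + \<i> * complex_of_real (symp_form 1 i j) / 2) * z j)"
      using a unfolding is_cm_def Let_def by blast
    then show "u0*v1 - u1*v0 \<le> qv2 G u0 u1 + qv2 G v0 v1"
      using s unfolding qv2_def
      apply (simp add: z_def two_set symp_form_def power2_eq_square algebra_simps)
      apply (simp add: field_simps)
      done
  qed
next
  assume a: "G 1 0 = G 0 1 \<and> (\<forall>u0 u1 v0 v1. u0*v1 - u1*v0 \<le> qv2 G u0 u1 + qv2 G v0 v1)"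
  have s: "G 1 0 = G 0 1" using a by auto
  show "is_cm 1 G"
    unfolding is_cm_def Let_def
  proof (intro conjI allI impI)
    show "G i j = G j i" if "i < 2*1" "j < 2*1" for i j using s sym2_iff that by blast
  next
    fix z :: "nat \<Rightarrow> complex"
    have h: "Re (z 0) * Im (z 1) - Re (z 1) * Im (z 0)
       \<le> qv2 G (Re (z 0)) (Re (z 1)) + qv2 G (Im (z 0)) (Im (z 1))"
      using a by blast
    show "Im (\<Sum>i<2*1. \<Sum>j<2*1. cnj (z i) *
                   (complex_of_real (G i j) + \<i> * complex_of_real (symp_form 1 i j) / 2) * z j) = 0"
      using s by (simp add: two_set symp_form_def algebra_simps)
    show "0 \<le> Re (\<Sum>i<2*1. \<Sum>j<2*1. cnj (z i) *
                   (complex_of_real (G i j) + \<i> * complex_of_real (symp_form 1 i j) / 2) * z j)"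
      using h s unfolding qv2_def
      apply (simp add: two_set symp_form_def power2_eq_square algebra_simps)
      apply (simp add: field_simps)
      done
  qed
qed

lemma mat_le_iff:
  assumes "sym4 A" "sym4 B"
  shows "mat_le 2 A B \<longleftrightarrow> (\<forall>x0 x1 x2 x3. qv4 A x0 x1 x2 x3 \<le> qv4 B x0 x1 x2 x3)"
proof -
  have s: "A 1 0 = A 0 1" "A 2 0 = A 0 2" "A 3 0 = A 0 3" "A 2 1 = A 1 2" "A 3 1 = A 1 3" "A 3 2 = A 2 3"
     "B 1 0 = B 0 1" "B 2 0 = B 0 2" "B 3 0 = B 0 3" "B 2 1 = B 1 2" "B 3 1 = B 1 3" "B 3 2 = B 2 3"
    using assms unfolding sym4_def by auto
  have e: "(\<Sum>i<2*2. \<Sum>j<2*2. x i * (B i j - A i j) * x j) = qv4 B (x 0) (x 1) (x 2) (x 3) - qv4 A (x 0) (x 1) (x 2) (x 3)" for x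
    using s unfolding qv4_def by (simp add: four_set power2_eq_square algebra_simps)
  show ?thesis
  proof
    assume "mat_le 2 A B"
    then show "\<forall>x0 x1 x2 x3. qv4 A x0 x1 x2 x3 \<le> qv4 B x0 x1 x2 x3"
    proof (intro allI)
      fix x0 x1 x2 x3 :: real
      assume m: "mat_le 2 A B"
      define xf where "xf = (\<lambda>i::nat. if i = 0 then x0 else if i = 1 then x1 else if i = 2 then x2 else x3)"
      have "0 \<le> (\<Sum>i<2*2. \<Sum>j<2*2. xf i * (B i j - A i j) * xf j)"
        using m unfolding mat_le_def by blast
      then show "qv4 A x0 x1 x2 x3 \<le> qv4 B x0 x1 x2 x3" unfolding e by (simp add: xf_def)
    qed
  next
    assume "\<forall>x0 x1 x2 x3. qv4 A x0 x1 x2 x3 \<le> qv4 B x0 x1 x2 x3"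
    then show "mat_le 2 A B" unfolding mat_le_def
    proof (intro allI)
      fix x :: "nat \<Rightarrow> real"
      assume "\<forall>x0 x1 x2 x3. qv4 A x0 x1 x2 x3 \<le> qv4 B x0 x1 x2 x3"
      then show "0 \<le> (\<Sum>i<2*2. \<Sum>j<2*2. x i * (B i j - A i j) * x j)" unfolding e by simp
    qed
  qed
qed

lemma ds_sym: "G 1 0 = G 0 1 \<Longrightarrow> H 1 0 = H 0 1 \<Longrightarrow> sym4 (direct_sum_1_1 G H)"
  unfolding sym4_def direct_sum_1_1_def by simp

lemma ds_qv: "qv4 (direct_sum_1_1 G H) x0 x1 x2 x3 = qv2 G x0 x1 + qv2 H x2 x3"
  unfolding qv4_def qv2_def direct_sum_1_1_def by simp

definition chanW where
  "chanW aA aB lA lB V = loss_2 lA lB (amp_2 aA aB V)"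

lemma chan_entry:
  assumes "1 \<le> aA" "1 \<le> aB" "lA < 1" "lB < 1"
  shows "loss_2 lA lB (amp_2 aA aB V) i j =
     (if i < 2 then sqrt ((1-lA)*aA) else sqrt ((1-lB)*aB)) * (if j < 2 then sqrt ((1-lA)*aA) else sqrt ((1-lB)*aB)) * V i j
     + (if i = j then (if i < 2 then ((1-lA)*(aA-1)+lA)/2 else ((1-lB)*(aB-1)+lB)/2) else 0)"
proof -
  have 1: "sqrt (1-lA) * sqrt (1-lA) = 1 - lA" "sqrt (1-lB) * sqrt (1-lB) = 1 - lB"
     "sqrt aA * sqrt aA = aA" "sqrt aB * sqrt aB = aB" using assms by auto
  show ?thesis
    using assms unfolding loss_2_def amp_2_def local_channel_2_def Let_def real_sqrt_mult
    by (auto simp: 1 field_simps)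
qed

lemma mix:
  fixes n b m N :: real
  assumes "b \<le> 2*n" "-2*n \<le> b" "2*m \<le> N" "-2*m \<le> N"
  shows "0 \<le> n*N + b*m"
proof -
  have "0 \<le> (2*n+b)*(N+2*m)" using assms by (intro mult_nonneg_nonneg) auto
  moreover have "0 \<le> (2*n-b)*(N-2*m)" using assms by (intro mult_nonneg_nonneg) auto
  ultimately show ?thesis by (simp add: algebra_simps)
qed

lemma kappa:
  fixes q S k :: real
  assumes "S \<le> q" "-S \<le> q" "-1 \<le> k" "k \<le> 1"
  shows "k*S \<le> q"
proof -
  have "0 \<le> (1+k)*(q-S)" using assms by (intro mult_nonneg_nonneg) auto
  moreover have "0 \<le> (1-k)*(q+S)" using assms by (intro mult_nonneg_nonneg) auto
  ultimately show ?thesis by (simp add: algebra_simps)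
qed

lemma mode_pos:
  fixes g00 g01 g11 :: real
  assumes h: "\<And>s0 s1 t0 t1. s0*t1 - s1*t0 \<le> g00*(s0^2+t0^2)+2*g01*(s0*s1+t0*t1)+g11*(s1^2+t1^2)"
  shows "0 < g00 \<and> 0 < g11 \<and> 1/4 \<le> g00*g11 - g01^2"
proof -
  have p0: "0 < g00"
  proof (rule ccontr)
    assume "\<not> 0 < g00"
    define a where "a = 1 + \<bar>g11\<bar>"
    have "a * 1 - 0 * 0 \<le> g00*(a^2+0^2)+2*g01*(a*0+0*1)+g11*(0^2+1^2)" using h by blast
    then have "a \<le> g00*a^2 + g11" by simp
    moreover have "g00*a^2 \<le> 0" using \<open>\<not> 0 < g00\<close> by (simp add: mult_nonpos_nonneg)
    ultimately show False unfolding a_def by linarith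
  qed
  have p1: "0 < g11"
  proof (rule ccontr)
    assume "\<not> 0 < g11"
    define a where "a = 1 + \<bar>g00\<bar>"
    have "1 * a - 0 * 0 \<le> g00*(1^2+0^2)+2*g01*(1*0+0*a)+g11*(0^2+a^2)" using h by blast
    then have "a \<le> g00 + g11*a^2" by simp
    moreover have "g11*a^2 \<le> 0" using \<open>\<not> 0 < g11\<close> by (simp add: mult_nonpos_nonneg)
    ultimately show False unfolding a_def by linarith
  qed
  have "g11 * (1/2) - (-g01) * 0 \<le> g00*(g11^2+0^2)+2*g01*(g11*(-g01)+0*(1/2))+g11*((-g01)^2+(1/2)^2)"
    using h by blast
  then have "0 \<le> g11 * (g00*g11 - g01^2 - 1/4)"
    by (simp add: power2_eq_square algebra_simps)
  then have "0 \<le> g00*g11 - g01^2 - 1/4" using p1 by (simp add: zero_le_mult_iff)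
  then show ?thesis using p0 p1 by simp
qed

definition Fq :: "real \<Rightarrow> real \<Rightarrow> real \<Rightarrow> real \<Rightarrow> real \<Rightarrow> real \<Rightarrow> real \<Rightarrow> real \<Rightarrow> real \<Rightarrow> real \<Rightarrow> real \<Rightarrow> real \<Rightarrow> real \<Rightarrow> real \<Rightarrow> real" where
  "Fq a00 a01 a11 c00 c01 c10 c11 p q r u0 u1 s0 s1 =
     a00*u0^2 + 2*a01*u0*u1 + a11*u1^2 + 2*(c00*u0*s0 + c01*u0*s1 + c10*u1*s0 + c11*u1*s1)
     + p*s0^2 + 2*q*s0*s1 + r*s1^2"

lemma schur_core:
  fixes a00 a01 a11 c00 c01 c10 c11 p q r :: real
  assumes HM: "\<And>u0 u1 v0 v1 s0 s1 t0 t1. u0*v1 - u1*v0 \<le>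
      Fq a00 a01 a11 c00 c01 c10 c11 p q r u0 u1 s0 s1 + Fq a00 a01 a11 c00 c01 c10 c11 p q r v0 v1 t0 t1"
    and pp: "0 < p" and dp: "0 < p*r - q^2"
  shows "\<exists>g00 g01 g11.
     (\<forall>u0 u1 v0 v1. u0*v1 - u1*v0 \<le> (g00*u0^2 + 2*g01*u0*u1 + g11*u1^2) + (g00*v0^2 + 2*g01*v0*v1 + g11*v1^2))
   \<and> (\<forall>u0 u1 s0 s1. g00*u0^2 + 2*g01*u0*u1 + g11*u1^2 \<le> Fq a00 a01 a11 c00 c01 c10 c11 p q r u0 u1 s0 s1)"
proof -
  define d where "d = p*r - q^2"
  have d0: "0 < d" using dp d_def by simp
  define g00 where "g00 = a00 - (r*c00^2 - 2*q*c00*c01 + p*c01^2)/d"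
  define g01 where "g01 = a01 - (r*c00*c10 - q*(c00*c11 + c01*c10) + p*c01*c11)/d"
  define g11 where "g11 = a11 - (r*c10^2 - 2*q*c10*c11 + p*c11^2)/d"
  define gq where "gq u0 u1 = g00*u0^2 + 2*g01*u0*u1 + g11*u1^2" for u0 u1
  have ident: "d * (Fq a00 a01 a11 c00 c01 c10 c11 p q r u0 u1 s0 s1 - gq u0 u1)
     = r*(c00*u0 + c10*u1 + p*s0 + q*s1)^2 - 2*q*(c00*u0 + c10*u1 + p*s0 + q*s1)*(c01*u0 + c11*u1 + q*s0 + r*s1)
       + p*(c01*u0 + c11*u1 + q*s0 + r*s1)^2" for u0 u1 s0 s1
  proof -
    define v0 where "v0 = c00*u0 + c10*u1"
    define v1 where "v1 = c01*u0 + c11*u1"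
    have "d * (Fq a00 a01 a11 c00 c01 c10 c11 p q r u0 u1 s0 s1 - gq u0 u1)
       = d * (2*(c00*u0*s0 + c01*u0*s1 + c10*u1*s0 + c11*u1*s1) + p*s0^2 + 2*q*s0*s1 + r*s1^2)
         + (r*v0^2 - 2*q*v0*v1 + p*v1^2)"
      using d0 unfolding Fq_def gq_def g00_def g01_def g11_def v0_def v1_def
      by (simp add: field_simps power2_eq_square)
    also have "\<dots> = r*(v0 + p*s0 + q*s1)^2 - 2*q*(v0 + p*s0 + q*s1)*(v1 + q*s0 + r*s1)
       + p*(v1 + q*s0 + r*s1)^2"
      unfolding d_def v0_def v1_def by (simp add: power2_eq_square algebra_simps)
    finally show ?thesis unfolding v0_def v1_def by (simp add: algebra_simps)
  qed
  have second: "gq u0 u1 \<le> Fq a00 a01 a11 c00 c01 c10 c11 p q r u0 u1 s0 s1" for u0 u1 s0 s1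
  proof -
    define w0 where "w0 = c00*u0 + c10*u1 + p*s0 + q*s1"
    define w1 where "w1 = c01*u0 + c11*u1 + q*s0 + r*s1"
    have "p * (r*w0^2 - 2*q*w0*w1 + p*w1^2) = (p*w1 - q*w0)^2 + d*w0^2"
      unfolding d_def by (simp add: power2_eq_square algebra_simps)
    also have "\<dots> \<ge> 0" using d0 by simp
    finally have "0 \<le> r*w0^2 - 2*q*w0*w1 + p*w1^2" using pp by (simp add: zero_le_mult_iff)
    then have "0 \<le> d * (Fq a00 a01 a11 c00 c01 c10 c11 p q r u0 u1 s0 s1 - gq u0 u1)"
      unfolding ident w0_def w1_def by simp
    then show ?thesis using d0 by (simp add: zero_le_mult_iff)
  qed
  have first: "u0*v1 - u1*v0 \<le> gq u0 u1 + gq v0 v1" for u0 u1 v0 v1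
  proof -
    define sx0 where "sx0 u0 u1 = -(r*(c00*u0 + c10*u1) - q*(c01*u0 + c11*u1))/d" for u0 u1
    define sx1 where "sx1 u0 u1 = -(p*(c01*u0 + c11*u1) - q*(c00*u0 + c10*u1))/d" for u0 u1
    have e0: "d * sx0 u0 u1 = -(r*(c00*u0 + c10*u1) - q*(c01*u0 + c11*u1))" for u0 u1
      using d0 unfolding sx0_def by simp
    have e1: "d * sx1 u0 u1 = -(p*(c01*u0 + c11*u1) - q*(c00*u0 + c10*u1))" for u0 u1
      using d0 unfolding sx1_def by simp
    have w0: "c00*u0 + c10*u1 + p*sx0 u0 u1 + q*sx1 u0 u1 = 0" for u0 u1
    proof -
      have "d * (c00*u0 + c10*u1 + p*sx0 u0 u1 + q*sx1 u0 u1) = d*(c00*u0 + c10*u1) + p*(d*sx0 u0 u1) + q*(d*sx1 u0 u1)"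
        by (simp add: algebra_simps)
      also have "\<dots> = 0" unfolding e0 e1 by (simp add: d_def algebra_simps power2_eq_square)
      finally show ?thesis using d0 by simp
    qed
    have w1: "c01*u0 + c11*u1 + q*sx0 u0 u1 + r*sx1 u0 u1 = 0" for u0 u1
    proof -
      have "d * (c01*u0 + c11*u1 + q*sx0 u0 u1 + r*sx1 u0 u1) = d*(c01*u0 + c11*u1) + q*(d*sx0 u0 u1) + r*(d*sx1 u0 u1)"
        by (simp add: algebra_simps)
      also have "\<dots> = 0" unfolding e0 e1 by (simp add: d_def algebra_simps power2_eq_square)
      finally show ?thesis using d0 by simp
    qed
    have eq: "Fq a00 a01 a11 c00 c01 c10 c11 p q r u0 u1 (sx0 u0 u1) (sx1 u0 u1) = gq u0 u1" for u0 u1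
    proof -
      have "d * (Fq a00 a01 a11 c00 c01 c10 c11 p q r u0 u1 (sx0 u0 u1) (sx1 u0 u1) - gq u0 u1) = 0"
        unfolding ident w0 w1 by simp
      then show ?thesis using d0 by simp
    qed
    show ?thesis using HM[of u0 v1 u1 v0 "sx0 u0 u1" "sx1 u0 u1" "sx0 v0 v1" "sx1 v0 v1"] eq by simp
  qed
  show ?thesis
    apply (rule exI[of _ g00], rule exI[of _ g01], rule exI[of _ g11])
    using first second unfolding gq_def by blast
qed

lemma necessity:
  fixes aA aB lA lB :: real
  assumes aA: "1 \<le> aA" and aB: "1 \<le> aB"
    and lA0: "0 \<le> lA" and lA1: "lA < 1" and lB0: "0 \<le> lB" and lB1: "lB < 1"
    and H: "\<forall>V. is_cm 2 V \<longrightarrow> gauss_separable_2 (loss_2 lA lB (amp_2 aA aB V))"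
  shows "1 / aA + 1 / aB \<le> 1"
proof (rule ccontr)
  assume "\<not> 1 / aA + 1 / aB \<le> 1"
  define e where "e = 1 / aA + 1 / aB - 1"
  have e0: "0 < e" using \<open>\<not> _\<close> e_def by simp
  define k where "k = 2 / e"
  have k0: "0 < k" using e0 k_def by simp
  define c where "c = (k + 1/k)/4"
  define s where "s = (k - 1/k)/4"
  define V where "V = (\<lambda>(i::nat) (j::nat). if i = j then c else if (i = 0 \<and> j = 2) \<or> (i = 2 \<and> j = 0) then s
      else if (i = 1 \<and> j = 3) \<or> (i = 3 \<and> j = 1) then -s else 0)"
  have Vs: "sym4 V" unfolding sym4_def V_def by simp
  have cmV: "is_cm 2 V"
    unfolding cm2_iff
  proof (intro conjI allI Vs)
    fix x0 x1 x2 x3 y0 y1 y2 y3 :: real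
    define a1 where "a1 = x0+x2"
    define a2 where "a2 = x1-x3"
    define b1 where "b1 = y0+y2"
    define b2 where "b2 = y1-y3"
    define a1' where "a1' = x0-x2"
    define a2' where "a2' = x1+x3"
    define b1' where "b1' = y0-y2"
    define b2' where "b2' = y1+y3"
    have kc: "4*k*c = k^2+1" "4*k*s = k^2 - 1" using k0 unfolding c_def s_def by (simp_all add: field_simps power2_eq_square)
    have "4*k*(qv4 V x0 x1 x2 x3 + qv4 V y0 y1 y2 y3 - (x0*y1 - x1*y0 + x2*y3 - x3*y2))
       = (4*k*c)*(x0^2+x1^2+x2^2+x3^2+y0^2+y1^2+y2^2+y3^2) + 2*(4*k*s)*(x0*x2 - x1*x3 + y0*y2 - y1*y3)
         - 4*k*(x0*y1 - x1*y0 + x2*y3 - x3*y2)"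
      unfolding qv4_def V_def by (simp add: algebra_simps)
    also have "\<dots> = (k*a1 - b2')^2 + (k*b2 - a1')^2 + (k*a2 + b1')^2 + (k*b1 + a2')^2"
      unfolding kc a1_def a2_def b1_def b2_def a1'_def a2'_def b1'_def b2'_def
      by (simp add: power2_eq_square algebra_simps)
    also have "\<dots> \<ge> 0" by simp
    finally have "0 \<le> 4*k*(qv4 V x0 x1 x2 x3 + qv4 V y0 y1 y2 y3 - (x0*y1 - x1*y0 + x2*y3 - x3*y2))" .
    then show "x0*y1 - x1*y0 + x2*y3 - x3*y2 \<le> qv4 V x0 x1 x2 x3 + qv4 V y0 y1 y2 y3"
      using k0 by (simp add: zero_le_mult_iff)
  qed
  define W where "W = loss_2 lA lB (amp_2 aA aB V)"
  obtain GA GB where GA: "is_cm 1 GA" and GB: "is_cm 1 GB" and M: "mat_le 2 (direct_sum_1_1 GA GB) W"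
    using H cmV unfolding W_def gauss_separable_2_def by blast
  define sA where "sA = sqrt ((1-lA)*aA)"
  define sB where "sB = sqrt ((1-lB)*aB)"
  define nA where "nA = ((1-lA)*(aA-1)+lA)/2"
  define nB where "nB = ((1-lB)*(aB-1)+lB)/2"
  have sA0: "0 < sA" using aA lA1 unfolding sA_def by simp
  have sB0: "0 < sB" using aB lB1 unfolding sB_def by simp
  have sA2: "sA*sA = (1-lA)*aA" using aA lA1 unfolding sA_def by simp
  have sB2: "sB*sB = (1-lB)*aB" using aB lB1 unfolding sB_def by simp
  have We: "W i j = (if i < 2 then sA else sB) * (if j < 2 then sA else sB) * V i j
     + (if i = j then (if i < 2 then nA else nB) else 0)" for i j
    unfolding W_def sA_def sB_def nA_def nB_def using chan_entry[OF aA aB lA1 lB1] by blast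
  have Ws: "sym4 W" unfolding sym4_def We V_def by simp
  have GAs: "GA 1 0 = GA 0 1" and GBs: "GB 1 0 = GB 0 1" using GA GB cm1_iff by auto
  have MM: "qv2 GA x0 x1 + qv2 GB x2 x3 \<le> qv4 W x0 x1 x2 x3" for x0 x1 x2 x3
    using M unfolding mat_le_iff[OF ds_sym[OF GAs GBs] Ws] ds_qv by blast
  define p where "p = 1/sA"
  define q where "q = 1/sB"
  have sp: "sA * p = 1" "sB * q = 1" using sA0 sB0 unfolding p_def q_def by auto
  have m1: "qv2 GA p 0 + qv2 GB (-q) 0 \<le> qv4 W p 0 (-q) 0" using MM by blast
  have m2: "qv2 GA 0 p + qv2 GB 0 q \<le> qv4 W 0 p 0 q" using MM by blast
  have g1: "p*p - 0*0 \<le> qv2 GA p 0 + qv2 GA 0 p" using GA cm1_iff by blast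
  have g2: "(-q)*(-q) - 0*0 \<le> qv2 GB (-q) 0 + qv2 GB 0 (-q)" using GB cm1_iff by blast
  have gb: "qv2 GB 0 (-q) = qv2 GB 0 q" unfolding qv2_def by simp
  have w1: "qv4 W p 0 (-q) 0 = 2*c - 2*s + nA*p^2 + nB*q^2"
  proof -
    have "qv4 W p 0 (-q) 0 = (sA*p)*(sA*p)*c + nA*p^2 + (sB*q)*(sB*q)*c + nB*q^2 - 2*(sA*p)*(sB*q)*s"
      unfolding qv4_def We V_def by (simp add: power2_eq_square algebra_simps)
    then show ?thesis unfolding sp by simp
  qed
  have w2: "qv4 W 0 p 0 q = 2*c - 2*s + nA*p^2 + nB*q^2"
  proof -
    have "qv4 W 0 p 0 q = (sA*p)*(sA*p)*c + nA*p^2 + (sB*q)*(sB*q)*c + nB*q^2 - 2*(sA*p)*(sB*q)*s"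
      unfolding qv4_def We V_def by (simp add: power2_eq_square algebra_simps)
    then show ?thesis unfolding sp by simp
  qed
  have cs: "4*c - 4*s = e" unfolding c_def s_def k_def using e0 by (simp add: field_simps)
  have pa: "(2*nA - 1)*p^2 = 1 - 2/aA"
  proof -
    have pp: "p^2 = 1/((1-lA)*aA)" unfolding p_def using sA2 by (simp add: power2_eq_square)
    show ?thesis unfolding pp nA_def using aA lA1 by (simp add: field_simps)
  qed
  have pb: "(2*nB - 1)*q^2 = 1 - 2/aB"
  proof -
    have pp: "q^2 = 1/((1-lB)*aB)" unfolding q_def using sB2 by (simp add: power2_eq_square)
    show ?thesis unfolding pp nB_def using aB lB1 by (simp add: field_simps)
  qed
  have "p^2 + q^2 \<le> 4*c - 4*s + 2*nA*p^2 + 2*nB*q^2"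
    using m1 m2 g1 g2 gb w1 w2 by (simp add: power2_eq_square)
  then have "0 \<le> e + (2*nA - 1)*p^2 + (2*nB - 1)*q^2" using cs by (simp add: algebra_simps)
  then have "0 \<le> e + 2 - 2/aA - 2/aB" using pa pb by simp
  then show False using e0 unfolding e_def by simp
qed

lemma suff1:
  fixes aA aB lA lB :: real
  assumes aA: "1 \<le> aA" and aB: "1 \<le> aB"
    and lA0: "0 \<le> lA" and lA1: "lA < 1" and lB0: "0 \<le> lB" and lB1: "lB < 1"
    and aB2: "2 \<le> aB" and cond: "1 / aA + 1 / aB \<le> 1" and cmV: "is_cm 2 V"
  shows "gauss_separable_2 (loss_2 lA lB (amp_2 aA aB V))"
proof -
  have Vs: "sym4 V" and HV: "\<And>x0 x1 x2 x3 y0 y1 y2 y3. x0*y1 - x1*y0 + x2*y3 - x3*y2 \<le> qv4 V x0 x1 x2 x3 + qv4 V y0 y1 y2 y3"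
    using cmV unfolding cm2_iff by blast+
  have VB: "0 < V 2 2 \<and> 0 < V 3 3 \<and> 1/4 \<le> V 2 2 * V 3 3 - (V 2 3)^2"
  proof (rule mode_pos)
    fix s0 s1 t0 t1 :: real
    have "0*0 - 0*0 + s0*t1 - s1*t0 \<le> qv4 V 0 0 s0 s1 + qv4 V 0 0 t0 t1" by (rule HV)
    then show "s0*t1 - s1*t0 \<le> V 2 2*(s0^2+t0^2)+2*V 2 3*(s0*s1+t0*t1)+V 3 3*(s1^2+t1^2)"
      unfolding qv4_def by (simp add: algebra_simps)
  qed
  define W where "W = loss_2 lA lB (amp_2 aA aB V)"
  define sA where "sA = sqrt ((1-lA)*aA)"
  define sB where "sB = sqrt ((1-lB)*aB)"
  define nA where "nA = ((1-lA)*(aA-1)+lA)/2"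
  define nB where "nB = ((1-lB)*(aB-1)+lB)/2"
  have sA0: "0 < sA" using aA lA1 unfolding sA_def by simp
  have sB0: "0 < sB" using aB lB1 unfolding sB_def by simp
  have sA2: "sA*sA = (1-lA)*aA" using aA lA1 unfolding sA_def by simp
  have sB2: "sB*sB = (1-lB)*aB" using aB lB1 unfolding sB_def by simp
  have We: "W i j = (if i < 2 then sA else sB) * (if j < 2 then sA else sB) * V i j
     + (if i = j then (if i < 2 then nA else nB) else 0)" for i j
    unfolding W_def sA_def sB_def nA_def nB_def using chan_entry[OF aA aB lA1 lB1] by blast
  have Vs': "V 1 0 = V 0 1" "V 2 0 = V 0 2" "V 3 0 = V 0 3" "V 2 1 = V 1 2" "V 3 1 = V 1 3" "V 3 2 = V 2 3"
    using Vs unfolding sym4_def by auto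
  have Ws: "sym4 W" unfolding sym4_def We using Vs' by simp
  define kp where "kp = 1 - 2/aB"
  have kp0: "0 \<le> kp" "kp \<le> 1" using aB2 unfolding kp_def by (simp_all add: field_simps)
  define eB where "eB = nB - 1/2"
  have eBe: "eB = (1-lB)*(aB-2)/2" unfolding eB_def nB_def by (simp add: field_simps)
  have eB0: "0 \<le> eB" unfolding eBe using aB2 lB1 by simp
  have kB: "kp * (sB*sB) = 2*eB" unfolding sB2 kp_def eB_def nB_def using aB by (simp add: field_simps)
  have kA1: "kp * (sA*sA) - 1 \<le> 2*nA"
  proof -
    have "kp * ((1-lA)*aA) \<le> 1 * ((1-lA)*aA)" using kp0 aA lA1 by (intro mult_right_mono) auto
    then show ?thesis unfolding sA2 nA_def using lA0 by (simp add: algebra_simps)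
  qed
  have kA2: "-2*nA \<le> kp * (sA*sA) - 1"
  proof -
    define X where "X = (1-lA)*aA"
    have "2 \<le> (1+kp)*aA" using cond aA aB unfolding kp_def by (simp add: field_simps)
    then have "2*(1-lA) \<le> (1+kp)*aA*(1-lA)" using lA1 by (intro mult_right_mono) auto
    moreover have "(1+kp)*aA*(1-lA) = X + kp*X" unfolding X_def by (simp add: algebra_simps)
    ultimately have "2*(1-lA) \<le> X + kp*X" by simp
    moreover have "2*nA = X - 1 + 2*lA" unfolding nA_def X_def by (simp add: field_simps)
    ultimately have "-2*nA \<le> kp*X - 1" by (simp add: algebra_simps)
    then show ?thesis unfolding sA2 X_def .
  qed
  define Fw where "Fw = Fq (W 0 0) (W 0 1) (W 1 1) (W 0 2) (W 0 3) (W 1 2) (W 1 3) (W 2 2 - 1/2) (W 2 3) (W 3 3 - 1/2)"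
  have HM: "u0*v1 - u1*v0 \<le> Fw u0 u1 s0 s1 + Fw v0 v1 t0 t1" for u0 u1 v0 v1 s0 s1 t0 t1
  proof -
    define Q where "Q = qv4 V (sA*u0) (sA*u1) (sB*s0) (sB*s1) + qv4 V (sA*v0) (sA*v1) (sB*t0) (sB*t1)"
    define mu where "mu = u0*v1 - u1*v0"
    define ms where "ms = s0*t1 - s1*t0"
    define Nu where "Nu = u0^2+u1^2+v0^2+v1^2"
    define Ns where "Ns = s0^2+s1^2+t0^2+t1^2"
    define Sx where "Sx = (sA*sA)*mu + (sB*sB)*ms"
    have q1: "Sx \<le> Q"
      using HV[of "sA*u0" "sA*v1" "sA*u1" "sA*v0" "sB*s0" "sB*t1" "sB*s1" "sB*t0"]
      unfolding Sx_def Q_def mu_def ms_def by (simp add: algebra_simps)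
    have q2: "-Sx \<le> Q"
      using HV[of "sA*u0" "-sA*v1" "sA*u1" "-sA*v0" "sB*s0" "-sB*t1" "sB*s1" "-sB*t0"]
      unfolding Sx_def Q_def mu_def ms_def qv4_def by (simp add: algebra_simps)
    have q3: "kp*Sx \<le> Q" using kappa[OF q1 q2] kp0 by simp
    have FQ: "Fw u0 u1 s0 s1 + Fw v0 v1 t0 t1 = Q + nA*Nu + eB*Ns"
      unfolding Fw_def Fq_def Q_def Nu_def Ns_def eB_def qv4_def We using Vs'
      by (simp add: power2_eq_square algebra_simps)
    have sq: "2*mu \<le> Nu" "-2*mu \<le> Nu" "2*ms \<le> Ns" "-2*ms \<le> Ns"
    proof -
      have "0 \<le> (u0-v1)^2 + (u1+v0)^2" "0 \<le> (u0+v1)^2 + (u1-v0)^2"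
           "0 \<le> (s0-t1)^2 + (s1+t0)^2" "0 \<le> (s0+t1)^2 + (s1-t0)^2" by simp_all
      then show "2*mu \<le> Nu" "-2*mu \<le> Nu" "2*ms \<le> Ns" "-2*ms \<le> Ns"
        unfolding mu_def Nu_def ms_def Ns_def by (simp_all add: power2_eq_square algebra_simps)
    qed
    have x1: "0 \<le> nA*Nu + (kp*(sA*sA) - 1)*mu" using mix[OF kA1 kA2 sq(1) sq(2)] .
    have x2: "0 \<le> eB*Ns + (kp*(sB*sB))*ms" using mix[of "kp*(sB*sB)" eB ms Ns] kB eB0 sq(3) sq(4) by simp
    have "Sx * kp = (kp*(sA*sA))*mu + (kp*(sB*sB))*ms" unfolding Sx_def by (simp add: algebra_simps)
    then show ?thesis using q3 x1 x2 FQ unfolding mu_def[symmetric] by (simp add: algebra_simps)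
  qed
  have pp: "0 < W 2 2 - 1/2" and dp: "0 < (W 2 2 - 1/2)*(W 3 3 - 1/2) - (W 2 3)^2"
  proof -
    have w22: "W 2 2 - 1/2 = (sB*sB)*V 2 2 + eB" unfolding We eB_def by simp
    have w33: "W 3 3 - 1/2 = (sB*sB)*V 3 3 + eB" unfolding We eB_def by simp
    have w23: "W 2 3 = (sB*sB)*V 2 3" unfolding We by simp
    have sBB: "0 < sB*sB" using sB0 by simp
    show "0 < W 2 2 - 1/2" unfolding w22 using VB sBB eB0 by (simp add: add_pos_nonneg)
    have "((sB*sB)*V 2 2 + eB)*((sB*sB)*V 3 3 + eB) - ((sB*sB)*V 2 3)^2
       = (sB*sB)^2*(V 2 2 * V 3 3 - (V 2 3)^2) + eB*(sB*sB)*(V 2 2 + V 3 3) + eB^2"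
      by (simp add: power2_eq_square algebra_simps)
    moreover have "0 < (sB*sB)^2*(V 2 2 * V 3 3 - (V 2 3)^2)"
    proof -
      have "1/4 \<le> V 2 2 * V 3 3 - (V 2 3)^2" using VB by blast
      then have "0 < V 2 2 * V 3 3 - (V 2 3)^2" by linarith
      then show ?thesis using sBB by (intro mult_pos_pos) auto
    qed
    moreover have "0 \<le> eB*(sB*sB)*(V 2 2 + V 3 3)" using VB sBB eB0 by simp
    ultimately show "0 < (W 2 2 - 1/2)*(W 3 3 - 1/2) - (W 2 3)^2" unfolding w22 w33 w23
      by (simp add: add_pos_nonneg)
  qed
  obtain g00 g01 g11 where
    G1: "\<forall>u0 u1 v0 v1. u0*v1 - u1*v0 \<le> (g00*u0^2 + 2*g01*u0*u1 + g11*u1^2) + (g00*v0^2 + 2*g01*v0*v1 + g11*v1^2)"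
    and G2: "\<forall>u0 u1 s0 s1. g00*u0^2 + 2*g01*u0*u1 + g11*u1^2 \<le> Fw u0 u1 s0 s1"
    using schur_core[OF HM[unfolded Fw_def] pp dp] unfolding Fw_def by blast
  define GA where "GA = (\<lambda>(i::nat) (j::nat). if i = 0 \<and> j = 0 then g00 else if i = 1 \<and> j = 1 then g11 else g01)"
  define GB where "GB = (\<lambda>(i::nat) (j::nat). if i = j then (1/2::real) else 0)"
  have qA: "qv2 GA u0 u1 = g00*u0^2 + 2*g01*u0*u1 + g11*u1^2" for u0 u1 unfolding qv2_def GA_def by simp
  have qB: "qv2 GB u0 u1 = (u0^2 + u1^2)/2" for u0 u1 unfolding qv2_def GB_def by simp
  have cA: "is_cm 1 GA" unfolding cm1_iff qA using G1 by (simp add: GA_def)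
  have cB: "is_cm 1 GB" unfolding cm1_iff qB
  proof (intro conjI allI)
    show "GB 1 0 = GB 0 1" by (simp add: GB_def)
    fix u0 u1 v0 v1 :: real
    have "0 \<le> (u0-v1)^2 + (u1+v0)^2" by simp
    then show "u0*v1 - u1*v0 \<le> (u0^2+u1^2)/2 + (v0^2+v1^2)/2" by (simp add: power2_eq_square field_simps)
  qed
  have GAs: "GA 1 0 = GA 0 1" and GBs: "GB 1 0 = GB 0 1" by (simp_all add: GA_def GB_def)
  have Mle: "mat_le 2 (direct_sum_1_1 GA GB) W"
    unfolding mat_le_iff[OF ds_sym[OF GAs GBs] Ws] ds_qv
  proof (intro allI)
    fix x0 x1 x2 x3 :: real
    have "qv4 W x0 x1 x2 x3 = Fw x0 x1 x2 x3 + (x2^2+x3^2)/2"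
      unfolding qv4_def Fw_def Fq_def using Ws unfolding sym4_def by (simp add: algebra_simps)
    then show "qv2 GA x0 x1 + qv2 GB x2 x3 \<le> qv4 W x0 x1 x2 x3" unfolding qA qB using G2 by simp
  qed
  show ?thesis unfolding W_def[symmetric] gauss_separable_2_def using cA cB Mle by blast
qed

lemma suff2:
  fixes aA aB lA lB :: real
  assumes aA: "1 \<le> aA" and aB: "1 \<le> aB"
    and lA0: "0 \<le> lA" and lA1: "lA < 1" and lB0: "0 \<le> lB" and lB1: "lB < 1"
    and aA2: "2 \<le> aA" and cond: "1 / aA + 1 / aB \<le> 1" and cmV: "is_cm 2 V"
  shows "gauss_separable_2 (loss_2 lA lB (amp_2 aA aB V))"
proof -
  have Vs: "sym4 V" and HV: "\<And>x0 x1 x2 x3 y0 y1 y2 y3. x0*y1 - x1*y0 + x2*y3 - x3*y2 \<le> qv4 V x0 x1 x2 x3 + qv4 V y0 y1 y2 y3"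
    using cmV unfolding cm2_iff by blast+
  have VA: "0 < V 0 0 \<and> 0 < V 1 1 \<and> 1/4 \<le> V 0 0 * V 1 1 - (V 0 1)^2"
  proof (rule mode_pos)
    fix s0 s1 t0 t1 :: real
    have "s0*t1 - s1*t0 + 0*0 - 0*0 \<le> qv4 V s0 s1 0 0 + qv4 V t0 t1 0 0" by (rule HV)
    then show "s0*t1 - s1*t0 \<le> V 0 0*(s0^2+t0^2)+2*V 0 1*(s0*s1+t0*t1)+V 1 1*(s1^2+t1^2)"
      unfolding qv4_def by (simp add: algebra_simps)
  qed
  define W where "W = loss_2 lA lB (amp_2 aA aB V)"
  define sA where "sA = sqrt ((1-lA)*aA)"
  define sB where "sB = sqrt ((1-lB)*aB)"
  define nA where "nA = ((1-lA)*(aA-1)+lA)/2"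
  define nB where "nB = ((1-lB)*(aB-1)+lB)/2"
  have sA0: "0 < sA" using aA lA1 unfolding sA_def by simp
  have sB0: "0 < sB" using aB lB1 unfolding sB_def by simp
  have sA2: "sA*sA = (1-lA)*aA" using aA lA1 unfolding sA_def by simp
  have sB2: "sB*sB = (1-lB)*aB" using aB lB1 unfolding sB_def by simp
  have We: "W i j = (if i < 2 then sA else sB) * (if j < 2 then sA else sB) * V i j
     + (if i = j then (if i < 2 then nA else nB) else 0)" for i j
    unfolding W_def sA_def sB_def nA_def nB_def using chan_entry[OF aA aB lA1 lB1] by blast
  have Vs': "V 1 0 = V 0 1" "V 2 0 = V 0 2" "V 3 0 = V 0 3" "V 2 1 = V 1 2" "V 3 1 = V 1 3" "V 3 2 = V 2 3"
    using Vs unfolding sym4_def by auto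
  have Ws: "sym4 W" unfolding sym4_def We using Vs' by simp
  define kp where "kp = 1 - 2/aA"
  have kp0: "0 \<le> kp" "kp \<le> 1" using aA2 unfolding kp_def by (simp_all add: field_simps)
  define eA where "eA = nA - 1/2"
  have eAe: "eA = (1-lA)*(aA-2)/2" unfolding eA_def nA_def by (simp add: field_simps)
  have eA0: "0 \<le> eA" unfolding eAe using aA2 lA1 by simp
  have kA: "kp * (sA*sA) = 2*eA" unfolding sA2 kp_def eA_def nA_def using aA by (simp add: field_simps)
  have kB1: "kp * (sB*sB) - 1 \<le> 2*nB"
  proof -
    have "kp * ((1-lB)*aB) \<le> 1 * ((1-lB)*aB)" using kp0 aB lB1 by (intro mult_right_mono) auto
    then show ?thesis unfolding sB2 nB_def using lB0 by (simp add: algebra_simps)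
  qed
  have kB2: "-2*nB \<le> kp * (sB*sB) - 1"
  proof -
    define X where "X = (1-lB)*aB"
    have "2 \<le> (1+kp)*aB" using cond aA aB unfolding kp_def by (simp add: field_simps)
    then have "2*(1-lB) \<le> (1+kp)*aB*(1-lB)" using lB1 by (intro mult_right_mono) auto
    moreover have "(1+kp)*aB*(1-lB) = X + kp*X" unfolding X_def by (simp add: algebra_simps)
    ultimately have "2*(1-lB) \<le> X + kp*X" by simp
    moreover have "2*nB = X - 1 + 2*lB" unfolding nB_def X_def by (simp add: field_simps)
    ultimately have "-2*nB \<le> kp*X - 1" by (simp add: algebra_simps)
    then show ?thesis unfolding sB2 X_def .
  qed
  define Fw where "Fw = Fq (W 2 2) (W 2 3) (W 3 3) (W 2 0) (W 2 1) (W 3 0) (W 3 1) (W 0 0 - 1/2) (W 0 1) (W 1 1 - 1/2)"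
  have HM: "u0*v1 - u1*v0 \<le> Fw u0 u1 s0 s1 + Fw v0 v1 t0 t1" for u0 u1 v0 v1 s0 s1 t0 t1
  proof -
    define Q where "Q = qv4 V (sA*s0) (sA*s1) (sB*u0) (sB*u1) + qv4 V (sA*t0) (sA*t1) (sB*v0) (sB*v1)"
    define mu where "mu = u0*v1 - u1*v0"
    define ms where "ms = s0*t1 - s1*t0"
    define Nu where "Nu = u0^2+u1^2+v0^2+v1^2"
    define Ns where "Ns = s0^2+s1^2+t0^2+t1^2"
    define Sx where "Sx = (sA*sA)*ms + (sB*sB)*mu"
    have q1: "Sx \<le> Q"
      using HV[of "sA*s0" "sA*t1" "sA*s1" "sA*t0" "sB*u0" "sB*v1" "sB*u1" "sB*v0"]
      unfolding Sx_def Q_def mu_def ms_def by (simp add: algebra_simps)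
    have q2: "-Sx \<le> Q"
      using HV[of "sA*s0" "-sA*t1" "sA*s1" "-sA*t0" "sB*u0" "-sB*v1" "sB*u1" "-sB*v0"]
      unfolding Sx_def Q_def mu_def ms_def qv4_def by (simp add: algebra_simps)
    have q3: "kp*Sx \<le> Q" using kappa[OF q1 q2] kp0 by simp
    have FQ: "Fw u0 u1 s0 s1 + Fw v0 v1 t0 t1 = Q + nB*Nu + eA*Ns"
      unfolding Fw_def Fq_def Q_def Nu_def Ns_def eA_def qv4_def We using Vs'
      by (simp add: power2_eq_square algebra_simps)
    have sq: "2*mu \<le> Nu" "-2*mu \<le> Nu" "2*ms \<le> Ns" "-2*ms \<le> Ns"
    proof -
      have "0 \<le> (u0-v1)^2 + (u1+v0)^2" "0 \<le> (u0+v1)^2 + (u1-v0)^2"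
           "0 \<le> (s0-t1)^2 + (s1+t0)^2" "0 \<le> (s0+t1)^2 + (s1-t0)^2" by simp_all
      then show "2*mu \<le> Nu" "-2*mu \<le> Nu" "2*ms \<le> Ns" "-2*ms \<le> Ns"
        unfolding mu_def Nu_def ms_def Ns_def by (simp_all add: power2_eq_square algebra_simps)
    qed
    have x1: "0 \<le> nB*Nu + (kp*(sB*sB) - 1)*mu" using mix[OF kB1 kB2 sq(1) sq(2)] .
    have x2: "0 \<le> eA*Ns + (kp*(sA*sA))*ms" using mix[of "kp*(sA*sA)" eA ms Ns] kA eA0 sq(3) sq(4) by simp
    have "Sx * kp = (kp*(sB*sB))*mu + (kp*(sA*sA))*ms" unfolding Sx_def by (simp add: algebra_simps)
    then show ?thesis using q3 x1 x2 FQ unfolding mu_def[symmetric] by (simp add: algebra_simps)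
  qed
  have pp: "0 < W 0 0 - 1/2" and dp: "0 < (W 0 0 - 1/2)*(W 1 1 - 1/2) - (W 0 1)^2"
  proof -
    have w22: "W 0 0 - 1/2 = (sA*sA)*V 0 0 + eA" unfolding We eA_def by simp
    have w33: "W 1 1 - 1/2 = (sA*sA)*V 1 1 + eA" unfolding We eA_def by simp
    have w23: "W 0 1 = (sA*sA)*V 0 1" unfolding We by simp
    have sAA: "0 < sA*sA" using sA0 by simp
    show "0 < W 0 0 - 1/2" unfolding w22 using VA sAA eA0 by (simp add: add_pos_nonneg)
    have "((sA*sA)*V 0 0 + eA)*((sA*sA)*V 1 1 + eA) - ((sA*sA)*V 0 1)^2
       = (sA*sA)^2*(V 0 0 * V 1 1 - (V 0 1)^2) + eA*(sA*sA)*(V 0 0 + V 1 1) + eA^2"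
      by (simp add: power2_eq_square algebra_simps)
    moreover have "0 < (sA*sA)^2*(V 0 0 * V 1 1 - (V 0 1)^2)"
    proof -
      have "1/4 \<le> V 0 0 * V 1 1 - (V 0 1)^2" using VA by blast
      then have "0 < V 0 0 * V 1 1 - (V 0 1)^2" by linarith
      then show ?thesis using sAA by (intro mult_pos_pos) auto
    qed
    moreover have "0 \<le> eA*(sA*sA)*(V 0 0 + V 1 1)" using VA sAA eA0 by simp
    ultimately show "0 < (W 0 0 - 1/2)*(W 1 1 - 1/2) - (W 0 1)^2" unfolding w22 w33 w23
      by (simp add: add_pos_nonneg)
  qed
  obtain g00 g01 g11 where
    G1: "\<forall>u0 u1 v0 v1. u0*v1 - u1*v0 \<le> (g00*u0^2 + 2*g01*u0*u1 + g11*u1^2) + (g00*v0^2 + 2*g01*v0*v1 + g11*v1^2)"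
    and G2: "\<forall>u0 u1 s0 s1. g00*u0^2 + 2*g01*u0*u1 + g11*u1^2 \<le> Fw u0 u1 s0 s1"
    using schur_core[OF HM[unfolded Fw_def] pp dp] unfolding Fw_def by blast
  define GB where "GB = (\<lambda>(i::nat) (j::nat). if i = 0 \<and> j = 0 then g00 else if i = 1 \<and> j = 1 then g11 else g01)"
  define GA where "GA = (\<lambda>(i::nat) (j::nat). if i = j then (1/2::real) else 0)"
  have qB: "qv2 GB u0 u1 = g00*u0^2 + 2*g01*u0*u1 + g11*u1^2" for u0 u1 unfolding qv2_def GB_def by simp
  have qA: "qv2 GA u0 u1 = (u0^2 + u1^2)/2" for u0 u1 unfolding qv2_def GA_def by simp
  have cB: "is_cm 1 GB" unfolding cm1_iff qB using G1 by (simp add: GB_def)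
  have cA: "is_cm 1 GA" unfolding cm1_iff qA
  proof (intro conjI allI)
    show "GA 1 0 = GA 0 1" by (simp add: GA_def)
    fix u0 u1 v0 v1 :: real
    have "0 \<le> (u0-v1)^2 + (u1+v0)^2" by simp
    then show "u0*v1 - u1*v0 \<le> (u0^2+u1^2)/2 + (v0^2+v1^2)/2" by (simp add: power2_eq_square field_simps)
  qed
  have GAs: "GA 1 0 = GA 0 1" and GBs: "GB 1 0 = GB 0 1" by (simp_all add: GA_def GB_def)
  have Mle: "mat_le 2 (direct_sum_1_1 GA GB) W"
    unfolding mat_le_iff[OF ds_sym[OF GAs GBs] Ws] ds_qv
  proof (intro allI)
    fix x0 x1 x2 x3 :: real
    have "qv4 W x0 x1 x2 x3 = Fw x2 x3 x0 x1 + (x0^2+x1^2)/2"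
      unfolding qv4_def Fw_def Fq_def using Ws unfolding sym4_def by (simp add: algebra_simps)
    moreover have "g00*x2^2 + 2*g01*x2*x3 + g11*x3^2 \<le> Fw x2 x3 x0 x1" using G2 by blast
    ultimately show "qv2 GA x0 x1 + qv2 GB x2 x3 \<le> qv4 W x0 x1 x2 x3" unfolding qA qB by linarith
  qed
  show ?thesis unfolding W_def[symmetric] gauss_separable_2_def using cA cB Mle by blast
qed

theorem proposition8:
  fixes aA aB lA lB :: real
  assumes "1 \<le> aA" and "1 \<le> aB"
    and "0 \<le> lA" and "lA < 1" and "0 \<le> lB" and "lB < 1"
  shows "(\<forall>V. is_cm 2 V \<longrightarrow> gauss_separable_2 (loss_2 lA lB (amp_2 aA aB V)))
         \<longleftrightarrow> 1 / aA + 1 / aB \<le> 1"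
proof
  assume "\<forall>V. is_cm 2 V \<longrightarrow> gauss_separable_2 (loss_2 lA lB (amp_2 aA aB V))"
  then show "1 / aA + 1 / aB \<le> 1" using necessity assms by blast
next
  assume c: "1 / aA + 1 / aB \<le> 1"
  show "\<forall>V. is_cm 2 V \<longrightarrow> gauss_separable_2 (loss_2 lA lB (amp_2 aA aB V))"
  proof (intro allI impI)
    fix V assume v: "is_cm 2 V"
    show "gauss_separable_2 (loss_2 lA lB (amp_2 aA aB V))"
    proof (cases "2 \<le> aB")
      case True
      then show ?thesis using suff1 assms c v by blast
    next
      case False
      then have "1/2 < 1/aB" using assms by (simp add: field_simps)
      then have "1/aA < 1/2" using c by linarith
      then have "2 \<le> aA" using assms by (simp add: field_simps)
      then show ?thesis using suff2 assms c v by blast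
    qed
  qed
qed

end
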